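(* For every positive integer $n$ there exist a present-bias parameter $b>1$ and an instance with $O(n)$ vertices such that the set of rewards $R$ placed at $t$ for which the sophisticated agent (with abandonment) reaches $t$ from the start node consists of exponentially many (in $n$) pairwise disjoint intervals.
   Context: An instance is a finite directed acyclic graph $G=(V,E)$ with nonnegative edge costs $c(u,v)$, a start node and a target node $t$, where $t$ is the unique node with no outgoing edges. Sophisticated agent with bias $b$ and reward $R$ at $t$, which may abandon: process nodes in reverse topological order; $t$ is never abandoned and $C_R(t)=0$. For $u\neq t$, among out-edges $(u,v)$ with $v$ not abandoned let $P(u,v)=b\,c(u,v)+C_R(v)$; if none exists or all have $P(u,v)>R$, $u$ is abandoned; otherwise the agent at $u$ moves to $v^*(u)\in\arg\min P(u,v)$ and $C_R(u)=c(u,v^*(u))+C_R(v^*(u))$. The agent reaches $t$ iff the start node is not abandoned. *)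

theory Defs
  imports "HOL-Analysis.Analysis"
begin

definition is_instance ::
  "nat set \<Rightarrow> (nat \<times> nat) set \<Rightarrow> (nat \<Rightarrow> nat \<Rightarrow> real) \<Rightarrow> nat \<Rightarrow> nat \<Rightarrow> bool" where
  "is_instance V E c s t \<longleftrightarrow>
     finite V \<and> E \<subseteq> V \<times> V \<and> acyclic E \<and>
     (\<forall>u v. (u, v) \<in> E \<longrightarrow> 0 \<le> c u v) \<and>
     s \<in> V \<and> t \<in> V \<and>
     (\<forall>u\<in>V. (\<forall>v. (u, v) \<notin> E) \<longleftrightarrow> u = t)"

text \<open>Local consistency of the backward-induction process of the sophisticated
  agent with bias b and reward R: ab u means u is abandoned, C u is C_R(u).
  Ties in the argmin are broken towards the least vertex index.\<close>
definition soph_consistent ::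
  "nat set \<Rightarrow> (nat \<times> nat) set \<Rightarrow> (nat \<Rightarrow> nat \<Rightarrow> real) \<Rightarrow> nat \<Rightarrow> real \<Rightarrow> real
     \<Rightarrow> (nat \<Rightarrow> bool) \<Rightarrow> (nat \<Rightarrow> real) \<Rightarrow> bool" where
  "soph_consistent V E c t b R ab C \<longleftrightarrow>
     \<not> ab t \<and> C t = 0 \<and>
     (\<forall>u\<in>V - {t}.
        let A = {v. (u, v) \<in> E \<and> \<not> ab v};
            P = (\<lambda>v. b * c u v + C v)
        in (ab u \<longleftrightarrow> (A = {} \<or> (\<forall>v\<in>A. P v > R))) \<and>
           (\<not> ab u \<longrightarrow>
              (let v' = (LEAST v. v \<in> A \<and> (\<forall>w\<in>A. P v \<le> P w))
               in C u = c u v' + C v')))"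

text \<open>The sophisticated agent reaches t: the start node is not abandoned
  (the consistent outcome is unique on acyclic instances).\<close>
definition soph_reaches ::
  "nat set \<Rightarrow> (nat \<times> nat) set \<Rightarrow> (nat \<Rightarrow> nat \<Rightarrow> real) \<Rightarrow> nat \<Rightarrow> nat \<Rightarrow> real \<Rightarrow> real \<Rightarrow> bool" where
  "soph_reaches V E c s t b R \<longleftrightarrow>
     (\<exists>ab C. soph_consistent V E c t b R ab C \<and> \<not> ab s)"

end

theory Submission
  imports Defs
begin

definition bb :: real where "bb = 6/5"
definition pp :: "nat \<Rightarrow> real" where "pp k = (1/5)^k"
definition aa :: "nat \<Rightarrow> real" where "aa k = (10/11) * (1/5)^k"

fun fv :: "nat \<Rightarrow> real \<Rightarrow> real" where
  "fv 0 R = 0"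
| "fv (Suc k) R = (if R - fv k R \<ge> bb * pp k then pp k + fv k R else aa k + fv k R)"

fun alive :: "nat \<Rightarrow> real \<Rightarrow> bool" where
  "alive 0 R = True"
| "alive (Suc k) R = (alive k R \<and> R - fv k R \<ge> bb * aa k)"

definition VV :: "nat \<Rightarrow> nat set" where "VV m = {0..2*m}"
definition EE :: "nat \<Rightarrow> (nat \<times> nat) set" where
  "EE m = {(u,v). u \<le> 2*m \<and> ((even u \<and> u \<ge> 2 \<and> (v = u - 2 \<or> v = u - 1)) \<or> (odd u \<and> v = u - 1))}"
definition cc :: "nat \<Rightarrow> nat \<Rightarrow> real" where
  "cc u v = (if odd u then pp (u div 2) else if v = u - 1 then 0 else aa (u div 2 - 1))"
definition abf :: "real \<Rightarrow> nat \<Rightarrow> bool" where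
  "abf R u = (if even u then \<not> alive (u div 2) R
     else \<not> (alive (u div 2) R \<and> R - fv (u div 2) R \<ge> bb * pp (u div 2)))"
definition Cf :: "real \<Rightarrow> nat \<Rightarrow> real" where
  "Cf R u = (if even u then fv (u div 2) R else pp (u div 2) + fv (u div 2) R)"

lemma EE_lt: "(u,v) \<in> EE m \<Longrightarrow> v < u \<and> u \<in> VV m \<and> v \<in> VV m"
  unfolding EE_def VV_def by (auto elim: oddE)

lemma trancl_lt: "(u,v) \<in> (EE m)\<^sup>+ \<Longrightarrow> v < u"
  by (induction rule: trancl_induct) (auto dest: EE_lt)

lemma inst: "is_instance (VV m) (EE m) cc (2*m) 0"
  unfolding is_instance_def
proof (intro conjI)
  show "finite (VV m)" by (simp add: VV_def)
  show "EE m \<subseteq> VV m \<times> VV m" using EE_lt by auto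
  show "acyclic (EE m)" unfolding acyclic_def using trancl_lt by blast
  show "\<forall>u v. (u, v) \<in> EE m \<longrightarrow> 0 \<le> cc u v" by (simp add: cc_def pp_def aa_def)
  show "2*m \<in> VV m" "0 \<in> VV m" by (auto simp: VV_def)
  show "\<forall>u\<in>VV m. (\<forall>v. (u, v) \<notin> EE m) = (u = 0)"
  proof
    fix u assume u: "u \<in> VV m"
    show "(\<forall>v. (u, v) \<notin> EE m) = (u = 0)"
    proof (cases "u = 0")
      case True then show ?thesis by (auto simp: EE_def)
    next
      case False
      then have "(u, u - 1) \<in> EE m" using u unfolding EE_def VV_def
        by (cases "even u") (auto elim: evenE)
      then show ?thesis using False by blast
    qed
  qed
qed

lemma numfacts: "pp k < bb * aa k" "aa k \<le> pp k" "0 \<le> aa k" "0 \<le> pp k"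
  by (auto simp: pp_def aa_def bb_def)

lemma succ_even: "k < m \<Longrightarrow> {v. (Suc(Suc(2*k)), v) \<in> EE m} = {2*k, Suc(2*k)}"
  unfolding EE_def by auto
lemma succ_odd: "k < m \<Longrightarrow> {v. (Suc(2*k), v) \<in> EE m} = {2*k}"
  unfolding EE_def by auto

lemma node_even:
  assumes "k < m"
  shows "(abf R (Suc(Suc(2*k))) \<longleftrightarrow> ({v. (Suc(Suc(2*k)),v) \<in> EE m \<and> \<not>abf R v} = {} \<or>
            (\<forall>v\<in>{v. (Suc(Suc(2*k)),v) \<in> EE m \<and> \<not>abf R v}. bb * cc (Suc(Suc(2*k))) v + Cf R v > R))) \<and>
         (\<not>abf R (Suc(Suc(2*k))) \<longrightarrow> Cf R (Suc(Suc(2*k))) =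
            cc (Suc(Suc(2*k))) (LEAST v. v\<in>{v. (Suc(Suc(2*k)),v) \<in> EE m \<and> \<not>abf R v} \<and>
               (\<forall>w\<in>{v. (Suc(Suc(2*k)),v) \<in> EE m \<and> \<not>abf R v}. bb * cc (Suc(Suc(2*k))) v + Cf R v \<le> bb * cc (Suc(Suc(2*k))) w + Cf R w))
            + Cf R (LEAST v. v\<in>{v. (Suc(Suc(2*k)),v) \<in> EE m \<and> \<not>abf R v} \<and>
               (\<forall>w\<in>{v. (Suc(Suc(2*k)),v) \<in> EE m \<and> \<not>abf R v}. bb * cc (Suc(Suc(2*k))) v + Cf R v \<le> bb * cc (Suc(Suc(2*k))) w + Cf R w)))"
proof -
  define u where "u = Suc(Suc(2*k))"
  define A where "A = {v. (u,v) \<in> EE m \<and> \<not>abf R v}"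
  define P where "P = (\<lambda>v. bb * cc u v + Cf R v)"
  have A: "A = {v \<in> {2*k, Suc(2*k)}. \<not> abf R v}" using succ_even[OF assms] unfolding A_def u_def by auto
  have ab0: "abf R (2*k) = (\<not> alive k R)" by (simp add: abf_def)
  have ab1: "abf R (Suc(2*k)) = (\<not> (alive k R \<and> R - fv k R \<ge> bb * pp k))" by (simp add: abf_def)
  have abu: "abf R u = (\<not> (alive k R \<and> R - fv k R \<ge> bb * aa k))" by (simp add: abf_def u_def)
  have P0: "P (2*k) = bb * aa k + fv k R" by (simp add: P_def cc_def u_def Cf_def)
  have P1: "P (Suc(2*k)) = pp k + fv k R" by (simp add: P_def cc_def u_def Cf_def)
  have c0: "cc u (2*k) + Cf R (2*k) = aa k + fv k R" by (simp add: cc_def u_def Cf_def)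
  have c1: "cc u (Suc (2*k)) + Cf R (Suc (2*k)) = pp k + fv k R" by (simp add: cc_def u_def Cf_def)
  have Cu: "Cf R u = fv (Suc k) R" by (simp add: Cf_def u_def)
  note nf = numfacts[of k]
  have goal: "(abf R u \<longleftrightarrow> (A = {} \<or> (\<forall>v\<in>A. P v > R))) \<and>
     (\<not>abf R u \<longrightarrow> Cf R u = cc u (LEAST v. v\<in>A \<and> (\<forall>w\<in>A. P v \<le> P w)) + Cf R (LEAST v. v\<in>A \<and> (\<forall>w\<in>A. P v \<le> P w)))"
  proof (cases "alive k R")
    case False
    then have "A = {}" using A ab0 ab1 by auto
    then show ?thesis using abu False by simp
  next
    case True
    show ?thesis
    proof (cases "R - fv k R \<ge> bb * pp k")
      case hp: True
      have AA: "A = {2*k, Suc(2*k)}" using A ab0 ab1 True hp by auto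
      have L: "(LEAST v. v\<in>A \<and> (\<forall>w\<in>A. P v \<le> P w)) = Suc(2*k)"
        by (rule Least_equality) (use nf P0 P1 AA in \<open>auto simp: not_less_eq_eq\<close>)
      have "bb * aa k \<le> bb * pp k" using nf by (simp add: bb_def)
      then show ?thesis using L c1 Cu abu AA P1 True hp nf
        by (auto simp: bb_def)
    next
      case hp: False
      have AA: "A = {2*k}" using A ab0 ab1 True hp by auto
      have L: "(LEAST v. v\<in>A \<and> (\<forall>w\<in>A. P v \<le> P w)) = 2*k"
        by (rule Least_equality) (use AA in auto)
      show ?thesis using L c0 Cu abu AA P0 True hp
        by auto
    qed
  qed
  then show ?thesis unfolding u_def A_def P_def .
qed

lemma node_odd:
  assumes "k < m"
  shows "(abf R (Suc(2*k)) \<longleftrightarrow> ({v. (Suc(2*k),v) \<in> EE m \<and> \<not>abf R v} = {} \<or>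
            (\<forall>v\<in>{v. (Suc(2*k),v) \<in> EE m \<and> \<not>abf R v}. bb * cc (Suc(2*k)) v + Cf R v > R))) \<and>
         (\<not>abf R (Suc(2*k)) \<longrightarrow> Cf R (Suc(2*k)) =
            cc (Suc(2*k)) (LEAST v. v\<in>{v. (Suc(2*k),v) \<in> EE m \<and> \<not>abf R v} \<and>
               (\<forall>w\<in>{v. (Suc(2*k),v) \<in> EE m \<and> \<not>abf R v}. bb * cc (Suc(2*k)) v + Cf R v \<le> bb * cc (Suc(2*k)) w + Cf R w))
            + Cf R (LEAST v. v\<in>{v. (Suc(2*k),v) \<in> EE m \<and> \<not>abf R v} \<and>
               (\<forall>w\<in>{v. (Suc(2*k),v) \<in> EE m \<and> \<not>abf R v}. bb * cc (Suc(2*k)) v + Cf R v \<le> bb * cc (Suc(2*k)) w + Cf R w)))"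
proof -
  define u where "u = Suc(2*k)"
  define A where "A = {v. (u,v) \<in> EE m \<and> \<not>abf R v}"
  define P where "P = (\<lambda>v. bb * cc u v + Cf R v)"
  have A: "A = {v \<in> {2*k}. \<not> abf R v}" using succ_odd[OF assms] unfolding A_def u_def by auto
  have ab0: "abf R (2*k) = (\<not> alive k R)" by (simp add: abf_def)
  have abu: "abf R u = (\<not> (alive k R \<and> R - fv k R \<ge> bb * pp k))" by (simp add: abf_def u_def)
  have P0: "P (2*k) = bb * pp k + fv k R" by (simp add: P_def cc_def u_def Cf_def)
  have c0: "cc u (2*k) + Cf R (2*k) = pp k + fv k R" by (simp add: cc_def u_def Cf_def)
  have Cu: "Cf R u = pp k + fv k R" by (simp add: Cf_def u_def)
  have goal: "(abf R u \<longleftrightarrow> (A = {} \<or> (\<forall>v\<in>A. P v > R))) \<and>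
     (\<not>abf R u \<longrightarrow> Cf R u = cc u (LEAST v. v\<in>A \<and> (\<forall>w\<in>A. P v \<le> P w)) + Cf R (LEAST v. v\<in>A \<and> (\<forall>w\<in>A. P v \<le> P w)))"
  proof (cases "alive k R")
    case False
    then have "A = {}" using A ab0 by auto
    then show ?thesis using abu False by simp
  next
    case True
    have AA: "A = {2*k}" using A ab0 True by auto
    have L: "(LEAST v. v\<in>A \<and> (\<forall>w\<in>A. P v \<le> P w)) = 2*k"
      by (rule Least_equality) (use AA in auto)
    show ?thesis using L c0 Cu abu AA P0 True by auto
  qed
  then show ?thesis unfolding u_def A_def P_def .
qed

lemma cons_all:
  assumes u: "u \<in> VV m - {0}"
  shows "(abf R u \<longleftrightarrow> ({v. (u,v) \<in> EE m \<and> \<not>abf R v} = {} \<or>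
            (\<forall>v\<in>{v. (u,v) \<in> EE m \<and> \<not>abf R v}. bb * cc u v + Cf R v > R))) \<and>
         (\<not>abf R u \<longrightarrow> Cf R u =
            cc u (LEAST v. v\<in>{v. (u,v) \<in> EE m \<and> \<not>abf R v} \<and>
               (\<forall>w\<in>{v. (u,v) \<in> EE m \<and> \<not>abf R v}. bb * cc u v + Cf R v \<le> bb * cc u w + Cf R w))
            + Cf R (LEAST v. v\<in>{v. (u,v) \<in> EE m \<and> \<not>abf R v} \<and>
               (\<forall>w\<in>{v. (u,v) \<in> EE m \<and> \<not>abf R v}. bb * cc u v + Cf R v \<le> bb * cc u w + Cf R w)))"
  proof (cases "even u")
    case True
    then obtain j where j: "u = 2*j" by (auto elim: evenE)
    with u obtain k where k: "u = Suc(Suc(2*k))" "k < m" unfolding VV_def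
      by (cases j) auto
    show ?thesis unfolding k(1) by (rule node_even[OF k(2)])
  next
    case False
    then obtain k where k: "u = Suc(2*k)" by (auto elim: oddE)
    with u have "k < m" unfolding VV_def by auto
    show ?thesis unfolding k(1) by (rule node_odd[OF \<open>k<m\<close>])
  qed

lemma cons: "soph_consistent (VV m) (EE m) cc 0 bb R (abf R) (Cf R)"
  unfolding soph_consistent_def Let_def
  apply (rule conjI)
   apply (simp add: abf_def)
  apply (rule conjI)
   apply (simp add: Cf_def)
  apply (rule ballI)
  apply (erule cons_all)
  done



lemma uniq:
  assumes sub: "\<And>u v. (u,v)\<in>E \<Longrightarrow> v < u \<and> v \<in> V"
    and fin: "finite V"
    and c1: "soph_consistent V E c t b R ab1 C1" and c2: "soph_consistent V E c t b R ab2 C2"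
  shows "u \<in> V \<Longrightarrow> ab1 u = ab2 u \<and> (\<not>ab1 u \<longrightarrow> C1 u = C2 u)"
proof (induction u rule: less_induct)
  case (less u)
  show ?case
  proof (cases "u = t")
    case True then show ?thesis using c1 c2 by (simp add: soph_consistent_def)
  next
    case False
    define A where "A = {v. (u,v)\<in>E \<and> \<not>ab1 v}"
    have A2: "{v. (u,v)\<in>E \<and> \<not>ab2 v} = A"
      unfolding A_def using less.IH sub by blast
    have PE: "\<And>v. v \<in> A \<Longrightarrow> b*c u v + C1 v = b*c u v + C2 v"
      unfolding A_def using less.IH sub by auto
    define P where "P = (\<lambda>v. b*c u v + C1 v)"
    define Q where "Q = (\<lambda>v. v\<in>A \<and> (\<forall>w\<in>A. P v \<le> P w))"
    have QE: "(\<lambda>v. v\<in>A \<and> (\<forall>w\<in>A. b*c u v + C2 v \<le> b*c u w + C2 w)) = Q"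
      unfolding Q_def P_def using PE by (auto intro!: ext)
    have h1: "(ab1 u \<longleftrightarrow> (A = {} \<or> (\<forall>v\<in>A. P v > R))) \<and> (\<not>ab1 u \<longrightarrow> C1 u = c u (Least Q) + C1 (Least Q))"
      using c1 less.prems False unfolding soph_consistent_def Let_def A_def P_def Q_def by auto
    have h2: "(ab2 u \<longleftrightarrow> (A = {} \<or> (\<forall>v\<in>A. b*c u v + C2 v > R))) \<and> (\<not>ab2 u \<longrightarrow> C2 u = c u (Least Q) + C2 (Least Q))"
    proof -
      have "let A = {v. (u,v)\<in>E \<and> \<not>ab2 v}; P = (\<lambda>v. b*c u v + C2 v)
        in (ab2 u \<longleftrightarrow> (A = {} \<or> (\<forall>v\<in>A. P v > R))) \<and>
           (\<not> ab2 u \<longrightarrow> (let v' = (LEAST v. v \<in> A \<and> (\<forall>w\<in>A. P v \<le> P w)) in C2 u = c u v' + C2 v'))"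
        using c2 less.prems False unfolding soph_consistent_def by blast
      then show ?thesis unfolding Let_def A2 QE .
    qed
    have abeq: "ab1 u = ab2 u" using h1 h2 PE P_def by auto
    moreover have "\<not>ab1 u \<longrightarrow> C1 u = C2 u"
    proof
      assume n: "\<not>ab1 u"
      then have Ane: "A \<noteq> {}" using h1 by auto
      have "finite A" using fin sub unfolding A_def
        by (metis (no_types, lifting) finite_subset mem_Collect_eq subsetI)
      then obtain v where v: "v \<in> A" "P v = Min (P ` A)" using Ane
        by (metis (no_types, lifting) Min_in empty_is_image finite_imageI imageE)
      have "Q v" unfolding Q_def using v \<open>finite A\<close> by auto
      then have "Q (Least Q)" by (rule LeastI)
      then have "Least Q \<in> A" unfolding Q_def by simp
      then show "C1 u = C2 u" using h1 h2 n abeq PE by auto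
    qed
    ultimately show ?thesis by blast
  qed
qed

lemma S_eq: "soph_reaches (VV m) (EE m) cc (2*m) 0 bb R \<longleftrightarrow> alive m R"
proof
  assume "alive m R"
  then show "soph_reaches (VV m) (EE m) cc (2*m) 0 bb R"
    unfolding soph_reaches_def using cons[of m R] by (auto simp: abf_def)
next
  assume "soph_reaches (VV m) (EE m) cc (2*m) 0 bb R"
  then obtain ab C where h: "soph_consistent (VV m) (EE m) cc 0 bb R ab C" "\<not> ab (2*m)"
    unfolding soph_reaches_def by blast
  have "ab (2*m) = abf R (2*m)"
    using uniq[OF _ _ h(1) cons[of m R], of "2*m"] EE_lt by (auto simp: VV_def)
  then show "alive m R" using h(2) by (simp add: abf_def)
qed



lemma pieces: "\<exists>F. finite F \<and> (\<forall>I\<in>F. is_interval I \<and> (\<exists>v. \<forall>R\<in>I. fv k R = v)) \<and> {R. alive k R} = \<Union>F"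
proof (induction k)
  case 0
  show ?case by (rule exI[of _ "{UNIV}"]) auto
next
  case (Suc k)
  then obtain F where F: "finite F" "\<forall>I\<in>F. is_interval I \<and> (\<exists>v. \<forall>R\<in>I. fv k R = v)" "{R. alive k R} = \<Union>F"
    by blast
  define g where "g I = (SOME v. \<forall>R\<in>I. fv k R = v)" for I
  have g: "\<And>I R. I \<in> F \<Longrightarrow> R \<in> I \<Longrightarrow> fv k R = g I"
  proof -
    fix I R assume IR: "I \<in> F" "R \<in> I"
    then obtain v where "\<forall>R\<in>I. fv k R = v" using F(2) by blast
    then have "\<forall>R\<in>I. fv k R = g I" unfolding g_def by (rule someI)
    then show "fv k R = g I" using IR by blast
  qed
  define F1 where "F1 = (\<lambda>I. I \<inter> {bb*aa k + g I ..< bb*pp k + g I}) ` F"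
  define F2 where "F2 = (\<lambda>I. I \<inter> {bb*pp k + g I ..}) ` F"
  show ?case
  proof (rule exI[of _ "F1 \<union> F2"], intro conjI)
    show "finite (F1 \<union> F2)" using F(1) by (simp add: F1_def F2_def)
  next
    show "\<forall>J\<in>F1 \<union> F2. is_interval J \<and> (\<exists>v. \<forall>R\<in>J. fv (Suc k) R = v)"
    proof (rule ballI)
    fix J assume "J \<in> F1 \<union> F2"
    then show "is_interval J \<and> (\<exists>v. \<forall>R\<in>J. fv (Suc k) R = v)"
    proof
      assume "J \<in> F1"
      then obtain I where I: "I \<in> F" "J = I \<inter> {bb*aa k + g I ..< bb*pp k + g I}" unfolding F1_def by blast
      have "is_interval J" using I F(2) by (simp add: is_interval_Int is_interval_ic is_interval_co)
      moreover have "\<forall>R\<in>J. fv (Suc k) R = aa k + g I" using I g by auto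
      ultimately show ?thesis by blast
    next
      assume "J \<in> F2"
      then obtain I where I: "I \<in> F" "J = I \<inter> {bb*pp k + g I ..}" unfolding F2_def by blast
      have "is_interval J" using I F(2) by (simp add: is_interval_Int is_interval_ic is_interval_co)
      moreover have "\<forall>R\<in>J. fv (Suc k) R = pp k + g I" using I g by auto
      ultimately show ?thesis by blast
    qed
    qed
  next
    have ab: "bb * aa k \<le> bb * pp k" using numfacts[of k] by (simp add: bb_def)
    show "{R. alive (Suc k) R} = \<Union>(F1 \<union> F2)"
    proof (intro set_eqI iffI)
      fix R assume "R \<in> {R. alive (Suc k) R}"
      then have R: "alive k R" "R - fv k R \<ge> bb * aa k" by auto
      then obtain I where I: "I \<in> F" "R \<in> I" using F(3) by blast
      have "fv k R = g I" using g I by blast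
      then show "R \<in> \<Union>(F1 \<union> F2)" using R I unfolding F1_def F2_def by force
    next
      fix R assume "R \<in> \<Union>(F1 \<union> F2)"
      then obtain I where I: "I \<in> F" "R \<in> I" "R \<ge> bb*aa k + g I"
        unfolding F1_def F2_def using ab by auto
      then have "alive k R" using F(3) by blast
      moreover have "fv k R = g I" using g I by blast
      ultimately show "R \<in> {R. alive (Suc k) R}" using I by auto
    qed
  qed
qed

lemma finite_components_union:
  fixes S :: "real set"
  assumes "finite F" "\<And>I. I \<in> F \<Longrightarrow> is_interval I" "S = \<Union>F"
  shows "finite (components S)"
proof -
  have "components S \<subseteq> (\<lambda>I. connected_component_set S (SOME x. x \<in> I)) ` F"
  proof
    fix K assume "K \<in> components S"
    then obtain x where x: "x \<in> S" "K = connected_component_set S x" unfolding components_def by blast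
    then obtain I where I: "I \<in> F" "x \<in> I" using assms(3) by blast
    define y where "y = (SOME x. x \<in> I)"
    have y: "y \<in> I" unfolding y_def using I by (metis someI_ex)
    have "connected I" using assms(2)[OF I(1)] by (simp add: is_interval_connected)
    moreover have "I \<subseteq> S" using I assms(3) by blast
    ultimately have "connected_component S x y" unfolding connected_component_def using I y by blast
    then have "K = connected_component_set S y" using x
      by (metis connected_component_eq mem_Collect_eq)
    then show "K \<in> (\<lambda>I. connected_component_set S (SOME x. x \<in> I)) ` F" using I y_def by blast
  qed
  then show ?thesis using assms(1) finite_subset by blast
qed

lemma finite_S: "finite (components {R. alive m R})"
proof -
  obtain F where F: "finite F \<and> (\<forall>I\<in>F. is_interval I \<and> (\<exists>v. \<forall>R\<in>I. fv m R = v)) \<and> {R. alive m R} = \<Union>F"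
    using pieces[of m] by (rule exE)
  show ?thesis
  proof (rule finite_components_union)
    show "finite F" using F by (rule conjunct1)
    show "{R. alive m R} = \<Union>F" using F by (simp only:)
    fix I assume "I \<in> F" then show "is_interval I" using F by (simp only:)
  qed
qed



definition hh :: "nat \<Rightarrow> real" where "hh k = (4/3) * (1/5)^k"

fun cst :: "bool list \<Rightarrow> real" where
  "cst [] = 0"
| "cst (x#xs) = cst xs + (if x then pp (length xs) else aa (length xs))"

fun low :: "bool list \<Rightarrow> real" where
  "low [] = 0"
| "low (x#xs) = (bb - 1) * (if x then pp (length xs) else aa (length xs))"

definition TT :: "bool list \<Rightarrow> real set" where
  "TT xs = {cst xs + low xs ..< cst xs + hh (length xs)}"

lemma nums2:
  "pp k + hh (Suc k) \<le> hh k" "aa k + hh (Suc k) \<le> bb * pp k" "bb * aa k < hh k"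
  "(bb - 1) * pp k < bb * aa (Suc k)" "(bb - 1) * aa k < bb * aa (Suc k)" "0 < aa k"
proof -
  have z: "(0::real) < (1/5)^k" by simp
  show "pp k + hh (Suc k) \<le> hh k" "aa k + hh (Suc k) \<le> bb * pp k" "bb * aa k < hh k"
    "(bb - 1) * pp k < bb * aa (Suc k)" "(bb - 1) * aa k < bb * aa (Suc k)" "0 < aa k"
    using z by (simp_all add: pp_def aa_def hh_def bb_def)
qed

lemma low_lt: "low xs < bb * aa (length xs)"
proof (cases xs)
  case Nil then show ?thesis using nums2(6)[of 0] by (simp add: bb_def)
next
  case (Cons x ys) then show ?thesis using nums2(4,5)[of "length ys"] by auto
qed

lemma tooth: "R \<in> TT xs \<Longrightarrow> alive (length xs) R \<and> fv (length xs) R = cst xs"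
proof (induction xs arbitrary: R)
  case Nil then show ?case by simp
next
  case (Cons x xs)
  define k where "k = length xs"
  define q where "q = (if x then pp k else aa k)"
  have R: "cst xs + bb * q \<le> R" "R < cst xs + q + hh (Suc k)"
    using Cons.prems unfolding TT_def q_def k_def by (auto simp: algebra_simps)
  have q1: "aa k \<le> q" "q \<le> pp k" using numfacts[of k] unfolding q_def by auto
  have "bb * aa k \<le> bb * q" using q1 by (simp add: bb_def)
  moreover have "low xs < bb * aa k" using low_lt[of xs] unfolding k_def .
  ultimately have "cst xs + low xs \<le> R" using R by linarith
  moreover have "R < cst xs + hh (length xs)" using R nums2(1)[of k] q1 unfolding k_def by linarith
  ultimately have IH: "alive k R" "fv k R = cst xs" using Cons.IH[of R] k_def TT_def by auto
  show ?case
  proof (cases x)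
    case True
    have "bb * aa k \<le> bb * pp k" using numfacts[of k] by (simp add: bb_def)
    then show ?thesis using IH R True unfolding q_def k_def by auto
  next
    case False
    have "R - fv k R < bb * pp k" using IH R nums2(2)[of k] False unfolding q_def by auto
    then show ?thesis using IH R False unfolding q_def k_def by auto
  qed
qed

lemma TT_sub: "TT (x#xs) \<subseteq> TT xs"
proof
  fix R assume "R \<in> TT (x#xs)"
  define k where "k = length xs"
  define q where "q = (if x then pp k else aa k)"
  have R: "cst xs + bb * q \<le> R" "R < cst xs + q + hh (Suc k)"
    using \<open>R \<in> TT (x#xs)\<close> unfolding TT_def q_def k_def by (auto simp: algebra_simps)
  have q1: "aa k \<le> q" "q \<le> pp k" using numfacts[of k] unfolding q_def by auto
  have "bb * aa k \<le> bb * q" using q1 by (simp add: bb_def)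
  moreover have "low xs < bb * aa k" using low_lt[of xs] unfolding k_def .
  ultimately have "cst xs + low xs \<le> R" using R by linarith
  moreover have "R < cst xs + hh (length xs)" using R nums2(1)[of k] q1 unfolding k_def by linarith
  ultimately show "R \<in> TT xs" unfolding TT_def by auto
qed

lemma TT_disj: "length xs = length ys \<Longrightarrow> xs \<noteq> ys \<Longrightarrow> TT xs \<inter> TT ys = {}"
proof (induction xs arbitrary: ys)
  case Nil then show ?case by simp
next
  case (Cons x xs)
  then obtain y ys' where ys: "ys = y # ys'" by (cases ys) auto
  show ?case
  proof (cases "xs = ys'")
    case False
    then have "TT xs \<inter> TT ys' = {}" using Cons ys by auto
    then show ?thesis using TT_sub[of x xs] TT_sub[of y ys'] ys by blast
  next
    case True
    then have xy: "x \<noteq> y" using Cons.prems ys by auto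
    define k where "k = length xs"
    have a: "TT (False#xs) \<subseteq> {..< cst xs + bb * pp k}"
      using nums2(2)[of k] unfolding TT_def k_def by (auto simp: algebra_simps)
    have b: "TT (True#xs) \<subseteq> {cst xs + bb * pp k ..}"
      unfolding TT_def k_def by (auto simp: algebra_simps)
    have "{..< cst xs + bb * pp k} \<inter> {cst xs + bb * pp k ..} = {}" by auto
    then have "TT (False#xs) \<inter> TT (True#xs) = {}" using a b by blast
    then show ?thesis using xy True ys by (cases x) auto
  qed
qed



definition rr :: "bool list \<Rightarrow> real" where "rr xs = cst xs + bb * aa (length xs)"
definition dd :: "bool list \<Rightarrow> real" where "dd xs = cst xs + low xs"

lemma rr_T: "rr xs \<in> TT xs"
  using low_lt[of xs] nums2(3)[of "length xs"] unfolding rr_def TT_def by auto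

lemma dd_T: "dd xs \<in> TT xs"
  using low_lt[of xs] nums2(3)[of "length xs"] unfolding dd_def TT_def by auto

lemma rr_alive: "alive (Suc (length xs)) (rr xs)"
  using tooth[OF rr_T[of xs]] unfolding rr_def by simp

lemma dd_dead: "\<not> alive (Suc (length xs)) (dd xs)"
  using tooth[OF dd_T[of xs]] low_lt[of xs] unfolding dd_def by simp

lemma sep_aux:
  assumes "length xs = n" "length ys = n" "xs \<noteq> ys" "rr xs < rr ys"
    and eq: "connected_component_set {R. alive (Suc n) R} (rr xs) = connected_component_set {R. alive (Suc n) R} (rr ys)"
  shows False
proof -
  define S where "S = {R. alive (Suc n) R}"
  have disj: "TT xs \<inter> TT ys = {}" using TT_disj assms by auto
  have "dd ys \<le> rr ys" using low_lt[of ys] unfolding dd_def rr_def by simp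
  have "rr xs < dd ys"
  proof (rule ccontr)
    assume "\<not> rr xs < dd ys"
    then have "rr xs \<in> TT ys" using rr_T[of ys] assms(4) unfolding TT_def dd_def by auto
    then show False using disj rr_T[of xs] by blast
  qed
  have rS: "rr ys \<in> S" using rr_alive[of ys] assms(2) unfolding S_def by simp
  have rS': "rr xs \<in> S" using rr_alive[of xs] assms(1) unfolding S_def by simp
  have eq': "connected_component_set S (rr xs) = connected_component_set S (rr ys)"
    using eq unfolding S_def .
  define K where "K = connected_component_set S (rr xs)"
  have "rr xs \<in> K" using rS' unfolding K_def by simp
  moreover have "rr ys \<in> K"
  proof -
    have "rr ys \<in> connected_component_set S (rr ys)" using rS by simp
    then show ?thesis unfolding K_def eq' .
  qed
  moreover have "is_interval K" unfolding K_def
    using is_interval_connected_1 connected_connected_component by blast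
  ultimately have "dd ys \<in> K" unfolding is_interval_1
    using \<open>rr xs < dd ys\<close> \<open>dd ys \<le> rr ys\<close> by (meson less_imp_le)
  then have "dd ys \<in> S" unfolding K_def using connected_component_subset by blast
  then show False using dd_dead[of ys] assms(2) unfolding S_def by simp
qed

lemma count_S: "card (components {R. alive (Suc n) R}) \<ge> 2 ^ n"
proof -
  define S where "S = {R. alive (Suc n) R}"
  define A where "A = {xs. set xs \<subseteq> (UNIV::bool set) \<and> length xs = n}"
  define f where "f xs = connected_component_set S (rr xs)" for xs
  have cardA: "card A = 2 ^ n" unfolding A_def
    using card_lists_length_eq[of "UNIV::bool set" n] by simp
  have inj: "inj_on f A"
  proof (rule inj_onI)
    fix xs ys assume "xs \<in> A" "ys \<in> A" "f xs = f ys"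
    show "xs = ys"
    proof (rule ccontr)
      assume ne: "xs \<noteq> ys"
      have l: "length xs = n" "length ys = n" using \<open>xs \<in> A\<close> \<open>ys \<in> A\<close> unfolding A_def by auto
      have "TT xs \<inter> TT ys = {}" using TT_disj l ne by auto
      then have "rr xs \<noteq> rr ys" using rr_T[of xs] rr_T[of ys] by auto
      then show False
      proof (cases "rr xs < rr ys")
        case True then show False using sep_aux[OF l ne True] \<open>f xs = f ys\<close> unfolding f_def S_def by blast
      next
        case False
        then have "rr ys < rr xs" using \<open>rr xs \<noteq> rr ys\<close> by linarith
        then show False using sep_aux[OF l(2,1) ne[symmetric]] \<open>f xs = f ys\<close> unfolding f_def S_def by metis
      qed
    qed
  qed
  have sub: "f ` A \<subseteq> components S"
  proof
    fix K assume "K \<in> f ` A"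
    then obtain xs where "xs \<in> A" "K = f xs" by blast
    then have "rr xs \<in> S" using rr_alive[of xs] unfolding A_def S_def by simp
    then show "K \<in> components S" unfolding components_def \<open>K = f xs\<close> f_def by blast
  qed
  have "card A \<le> card (components S)"
    using card_inj_on_le[OF inj sub] finite_S[of "Suc n"] unfolding S_def by blast
  then show ?thesis using cardA unfolding S_def by (simp del: alive.simps)
qed


theorem mainTheorem6:
  "\<exists>K::real. \<exists>d::real. K > 0 \<and> d > 0 \<and>
     (\<forall>n::nat. n \<ge> 1 \<longrightarrow>
        (\<exists>b::real. b > 1 \<and>
         (\<exists>V E c s t. is_instance V E c s t \<and> real (card V) \<le> K * real n \<and>
            (let S = {R::real. soph_reaches V E c s t b R}
             in finite (components S) \<and>
                real (card (components S)) \<ge> 2 powr (d * real n)))))"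
proof (rule exI[of _ "5::real"], rule exI[of _ "1::real"], intro conjI allI impI)
  fix n :: nat assume n: "n \<ge> 1"
  define m where "m = Suc n"
  have Seq: "{R::real. soph_reaches (VV m) (EE m) cc (2*m) 0 bb R} = {R. alive m R}"
    using S_eq by blast
  have cV: "real (card (VV m)) \<le> 5 * real n" using n unfolding VV_def m_def by simp
  have cnt: "real (card (components {R. alive m R})) \<ge> 2 powr (1 * real n)"
  proof -
    have "(2::real) powr (1 * real n) = 2 ^ n" by (simp add: powr_realpow)
    also have "\<dots> \<le> real (card (components {R. alive m R}))"
      using count_S[of n] unfolding m_def
      by (metis of_nat_le_iff of_nat_numeral of_nat_power)
    finally show ?thesis .
  qed
  show "\<exists>b::real. b > 1 \<and>
         (\<exists>V E c s t. is_instance V E c s t \<and> real (card V) \<le> 5 * real n \<and>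
            (let S = {R::real. soph_reaches V E c s t b R}
             in finite (components S) \<and>
                real (card (components S)) \<ge> 2 powr (1 * real n)))"
    apply (rule exI[of _ bb])
    apply (rule conjI)
     apply (simp add: bb_def)
    apply (rule exI[of _ "VV m"], rule exI[of _ "EE m"], rule exI[of _ cc], rule exI[of _ "2*m"], rule exI[of _ 0])
    unfolding Let_def Seq using inst[of m] cV cnt finite_S[of m] by blast
qed (simp_all)



end
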